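(* Let $G=(V,E)$ be any finite simple graph and $\alpha\in\mathbb R$. For any self-avoiding path or cycle $\gamma \subset G$, $$\frac{Z(V \setminus \gamma)}{Z(V)} \leq \left( \frac{1}{1 + e^{- 2 \alpha}} \right)^{ \|\gamma \|/2},$$ where $V\setminus\gamma$ denotes $V$ minus the vertex set of $\gamma$ and $\|\gamma\|$ is the number of edges of $\gamma$.
   Context: For $U\subset V$, consider the subgraph induced by $U$ (vertices $U$, edges of $E$ with both endpoints in $U$). A permutation on $U$ is a bijection $\pi:U\to U$ with $\pi(x)=x$ or $\{x,\pi(x)\}\in E$ for all $x$; $\mathcal S_U$ is the set of them, and $Z(U)=\sum_{\pi\in\mathcal S_U}\exp(-\alpha\sum_{x\in U}\mathbb 1\{\pi(x)\neq x\})$, with $Z(\emptyset)=1$. A self-avoiding path is a finite directed subgraph with vertices enumerated $x^1,\dots,x^n$ and edges $(x^i,x^{i+1})$, $1\le i\le n-1$; a cycle additionally has the edge $(x^n,x^1)$. *)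

theory Defs
  imports Complex_Main "HOL-Combinatorics.Permutations"
begin

definition simple_graph :: "'a set \<Rightarrow> ('a \<Rightarrow> 'a \<Rightarrow> bool) \<Rightarrow> bool" where
  "simple_graph V E \<longleftrightarrow> finite V \<and> (\<forall>x y. E x y \<longrightarrow> x \<in> V \<and> y \<in> V)
     \<and> (\<forall>x y. E x y \<longrightarrow> E y x) \<and> (\<forall>x. \<not> E x x)"

definition graph_perms :: "('a \<Rightarrow> 'a \<Rightarrow> bool) \<Rightarrow> 'a set \<Rightarrow> ('a \<Rightarrow> 'a) set" where
  "graph_perms E U = {\<pi>. \<pi> permutes U \<and> (\<forall>x\<in>U. \<pi> x = x \<or> E x (\<pi> x))}"

definition Z :: "('a \<Rightarrow> 'a \<Rightarrow> bool) \<Rightarrow> real \<Rightarrow> 'a set \<Rightarrow> real" where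
  "Z E \<alpha> U = (\<Sum>\<pi>\<in>graph_perms E U. exp (- \<alpha> * real (card {x\<in>U. \<pi> x \<noteq> x})))"

definition sa_path :: "'a set \<Rightarrow> ('a \<Rightarrow> 'a \<Rightarrow> bool) \<Rightarrow> 'a list \<Rightarrow> bool" where
  "sa_path V E xs \<longleftrightarrow> xs \<noteq> [] \<and> distinct xs \<and> set xs \<subseteq> V
     \<and> (\<forall>i. Suc i < length xs \<longrightarrow> E (xs ! i) (xs ! Suc i))"

definition sa_cycle :: "'a set \<Rightarrow> ('a \<Rightarrow> 'a \<Rightarrow> bool) \<Rightarrow> 'a list \<Rightarrow> bool" where
  "sa_cycle V E xs \<longleftrightarrow> sa_path V E xs \<and> E (last xs) (hd xs)"

definition path_edges :: "'a list \<Rightarrow> nat" where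
  "path_edges xs = length xs - 1"

definition cycle_edges :: "'a list \<Rightarrow> nat" where
  "cycle_edges xs = length xs"

end

theory Submission
  imports Defs "HOL-Combinatorics.Cycles"
begin


fun PP :: "real \<Rightarrow> nat \<Rightarrow> real" where
  "PP t 0 = 1" | "PP t (Suc 0) = 1" | "PP t (Suc (Suc n)) = PP t (Suc n) + t * PP t n"

lemma PP_nonneg: "t \<ge> 0 \<Longrightarrow> PP t n \<ge> 0"
  by (induction t n rule: PP.induct) auto

lemma PP_path: assumes "t \<ge> 0" shows "sqrt (1+t) ^ n \<le> PP t (Suc n)"
proof (induction n rule: less_induct)
  case (less n)
  let ?q = "sqrt (1+t)"
  have q1: "?q \<ge> 1" using assms by simp
  have qq: "?q^2 = 1 + t" using assms by simp
  show ?case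
  proof (cases n)
    case 0 then show ?thesis by simp
  next
    case (Suc m)
    show ?thesis
    proof (cases m)
      case 0
      have "?q * 1 \<le> ?q * ?q" using q1 by (intro mult_left_mono) auto
      then have "?q \<le> 1 + t" using qq by (simp add: power2_eq_square)
      then show ?thesis using Suc 0 by simp
    next
      case (Suc k)
      have ih1: "?q ^ m \<le> PP t (Suc m)" using less \<open>n = Suc m\<close> by simp
      have ih2: "?q ^ k \<le> PP t (Suc k)" using less \<open>n = Suc m\<close> Suc by simp
      have "?q ^ n = ?q^k * ?q^2" using \<open>n = Suc m\<close> Suc by (simp add: power2_eq_square)
      also have "\<dots> = ?q^k * (1 + t)" using qq by simp
      also have "\<dots> \<le> ?q^k * (?q + t)" using q1 by (intro mult_left_mono) auto
      also have "\<dots> = ?q^m + t * ?q^k" using Suc by (simp add: algebra_simps)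
      also have "\<dots> \<le> PP t (Suc m) + t * PP t (Suc k)"
        using ih1 ih2 assms by (intro add_mono mult_left_mono) auto
      also have "\<dots> = PP t (Suc n)" using \<open>n = Suc m\<close> Suc by simp
      finally show ?thesis .
    qed
  qed
qed

lemma PP_closed:
  assumes "t \<ge> 0"
  defines "r \<equiv> sqrt (1 + 4*t)"
  defines "l1 \<equiv> (1 + r)/2" and "l2 \<equiv> (1 - r)/2"
  shows "PP t n * r = l1^(Suc n) - l2^(Suc n)"
proof -
  have rr: "r^2 = 1 + 4*t" using assms unfolding r_def by simp
  have e1: "l1^2 = l1 + t" unfolding l1_def using rr by (simp add: power2_eq_square field_simps)
  have e2: "l2^2 = l2 + t" unfolding l2_def using rr by (simp add: power2_eq_square field_simps)
  have l12: "l1^Suc (Suc k) = l1^(Suc k) + t * l1^k" for k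
  proof -
    have "l1^Suc (Suc k) = l1^2 * l1^k" by (simp add: power2_eq_square)
    also have "\<dots> = (l1 + t) * l1^k" using e1 by simp
    finally show ?thesis by (simp add: algebra_simps)
  qed
  have l22: "l2^Suc (Suc k) = l2^(Suc k) + t * l2^k" for k
  proof -
    have "l2^Suc (Suc k) = l2^2 * l2^k" by (simp add: power2_eq_square)
    also have "\<dots> = (l2 + t) * l2^k" using e2 by simp
    finally show ?thesis by (simp add: algebra_simps)
  qed
  show ?thesis
  proof (induction n rule: less_induct)
    case (less n)
    show ?case
    proof (cases n)
      case 0 then show ?thesis by (simp add: l1_def l2_def field_simps)
    next
      case (Suc m)
      show ?thesis
      proof (cases m)
        case 0 then show ?thesis using Suc rr by (simp add: l1_def l2_def power2_eq_square field_simps)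
      next
        case (Suc k)
        have "PP t n * r = PP t (Suc k) * r + t * (PP t k * r)" using \<open>n = Suc m\<close> Suc
          by (simp add: algebra_simps)
        also have "\<dots> = (l1^(Suc (Suc k)) - l2^(Suc (Suc k))) + t * (l1^(Suc k) - l2^(Suc k))"
          using less \<open>n = Suc m\<close> Suc by simp
        also have "\<dots> = l1^(Suc n) - l2^(Suc n)" using \<open>n = Suc m\<close> Suc l12 l22
          by (simp only: ) (simp add: algebra_simps)
        finally show ?thesis .
      qed
    qed
  qed
qed

lemma PP_cycle:
  assumes s0: "s \<ge> 0"
  shows "sqrt (1 + s^2) ^ (Suc (Suc m)) \<le> PP (s^2) (Suc m) + 2 * s^2 * PP (s^2) m + s ^ (Suc (Suc m))"
proof -
  define t where "t = s^2"
  have t0: "t \<ge> 0" unfolding t_def by simp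
  define r where "r = sqrt (1 + 4*t)"
  define l1 where "l1 = (1 + r)/2"
  define l2 where "l2 = (1 - r)/2"
  have rr: "r^2 = 1 + 4*t" using t0 unfolding r_def by simp
  have r1: "r \<ge> 1" using t0 unfolding r_def by simp
  have c1: "PP t (Suc m) * r = l1^(Suc (Suc m)) - l2^(Suc (Suc m))"
    using PP_closed[OF t0] unfolding r_def l1_def l2_def by blast
  have c2: "PP t m * r = l1^(Suc m) - l2^(Suc m)"
    using PP_closed[OF t0] unfolding r_def l1_def l2_def by blast
  have tl: "t = -(l1*l2)" unfolding l1_def l2_def using rr by (simp add: power2_eq_square field_simps)
  have rl: "r = l1 - l2" unfolding l1_def l2_def by (simp add: field_simps)
  have l2l: "l2 = 1 - l1" unfolding l1_def l2_def by (simp add: field_simps)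
  have "r * (PP t (Suc m) + 2 * t * PP t m) = PP t (Suc m) * r + 2 * t * (PP t m * r)"
    by (simp add: algebra_simps)
  also have "\<dots> = (l1^(Suc (Suc m)) - l2^(Suc (Suc m))) + 2 * t * (l1^(Suc m) - l2^(Suc m))"
    by (simp only: c1 c2)
  also have "\<dots> = r * (l1^(Suc (Suc m)) + l2^(Suc (Suc m)))"
  proof -
    define a where "a = l1^(Suc m)"
    define b where "b = l2^(Suc m)"
    have "(l1^(Suc (Suc m)) - l2^(Suc (Suc m))) + 2 * t * (l1^(Suc m) - l2^(Suc m))
        = (l1 * a - l2 * b) + 2 * (-(l1*l2)) * (a - b)" unfolding a_def b_def tl by simp
    also have "\<dots> = (l1 - l2) * (l1 * a + l2 * b)" unfolding l2l by (simp add: algebra_simps)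
    also have "\<dots> = r * (l1^(Suc (Suc m)) + l2^(Suc (Suc m)))" unfolding rl a_def b_def by simp
    finally show ?thesis .
  qed
  finally have eq: "r * (PP t (Suc m) + 2 * t * PP t m) = r * (l1^(Suc (Suc m)) + l2^(Suc (Suc m)))"
    .
  have key: "PP t (Suc m) + 2 * t * PP t m = l1^(Suc (Suc m)) + l2^(Suc (Suc m))"
    using eq r1 by simp
  have q_le: "sqrt (1 + t) \<le> l1"
  proof -
    have "1 + t \<le> l1^2" unfolding l1_def using rr r1 by (simp add: power2_eq_square field_simps)
    then have "sqrt (1+t) \<le> sqrt (l1^2)" by (rule real_sqrt_le_mono)
    also have "\<dots> = l1" using r1 unfolding l1_def by simp
    finally show ?thesis .
  qed
  have l2s: "\<bar>l2\<bar> \<le> s"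
  proof -
    have e: "(2*s+1)^2 = 1 + 4*s^2 + 4*s" by (simp add: power2_eq_square algebra_simps)
    have "r^2 \<le> (2*s+1)^2" unfolding e rr t_def using s0 by linarith
    moreover have "0 \<le> 2*s+1" using s0 by simp
    ultimately have "r \<le> 2*s+1" by (rule power2_le_imp_le)
    then show ?thesis unfolding l2_def using r1 by simp
  qed
  have "\<bar>l2^(Suc (Suc m))\<bar> \<le> s^(Suc (Suc m))"
    unfolding power_abs by (rule power_mono[OF l2s]) simp
  then have A: "0 \<le> l2^(Suc (Suc m)) + s^(Suc (Suc m))" by linarith
  have B: "sqrt (1+t) ^ (Suc (Suc m)) \<le> l1 ^ (Suc (Suc m))"
    by (rule power_mono[OF q_le]) (use t0 in simp)
  show ?thesis using A B key unfolding t_def[symmetric] by linarith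
qed



definition wt :: "real \<Rightarrow> 'a set \<Rightarrow> ('a \<Rightarrow> 'a) \<Rightarrow> real" where
  "wt \<alpha> U \<pi> = exp (- \<alpha> * real (card {x\<in>U. \<pi> x \<noteq> x}))"

lemma Z_wt: "Z E \<alpha> U = sum (wt \<alpha> U) (graph_perms E U)"
  by (simp add: Z_def wt_def)

lemma gp_finite: "finite U \<Longrightarrow> finite (graph_perms E U)"
  by (rule finite_subset[OF _ finite_permutations[of U]]) (auto simp: graph_perms_def)

lemma Z_nonneg: "Z E \<alpha> U \<ge> 0"
  unfolding Z_def by (intro sum_nonneg) auto

lemma Z_pos: assumes "finite U" shows "Z E \<alpha> U > 0"
proof -
  have i: "(\<lambda>x. x) \<in> graph_perms E U" using permutes_id[of U] by (simp add: graph_perms_def id_def)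
  have "0 < exp (- \<alpha> * real (card {x\<in>U. (\<lambda>x. x) x \<noteq> x}))" by simp
  also have "\<dots> \<le> Z E \<alpha> U" unfolding Z_def
    using gp_finite[OF assms] i
    by (intro member_le_sum) auto
  finally show ?thesis .
qed

lemma comp_in:
  assumes p: "\<pi> \<in> graph_perms E A" and s: "\<sigma> \<in> graph_perms E B" and d: "A \<inter> B = {}"
  shows "\<pi> \<circ> \<sigma> \<in> graph_perms E (A \<union> B)"
    and "finite A \<Longrightarrow> finite B \<Longrightarrow> wt \<alpha> (A \<union> B) (\<pi> \<circ> \<sigma>) = wt \<alpha> A \<pi> * wt \<alpha> B \<sigma>"
proof -
  have pA: "\<pi> permutes A" and eA: "\<forall>x\<in>A. \<pi> x = x \<or> E x (\<pi> x)" using p by (auto simp: graph_perms_def)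
  have pB: "\<sigma> permutes B" and eB: "\<forall>x\<in>B. \<sigma> x = x \<or> E x (\<sigma> x)" using s by (auto simp: graph_perms_def)
  have sA: "\<sigma> z = z" if "z \<in> A" for z using that d permutes_not_in[OF pB] by blast
  have pBz: "\<pi> (\<sigma> z) = \<sigma> z" if "z \<in> B" for z
    using permutes_in_image[OF pB] that d permutes_not_in[OF pA] by blast
  have "(\<pi> \<circ> \<sigma>) permutes (A \<union> B)"
    by (rule permutes_compose[OF permutes_subset[OF pB] permutes_subset[OF pA]]) auto
  moreover have "\<forall>x\<in>A \<union> B. (\<pi> \<circ> \<sigma>) x = x \<or> E x ((\<pi> \<circ> \<sigma>) x)"
    using eA eB sA pBz by auto
  ultimately show "\<pi> \<circ> \<sigma> \<in> graph_perms E (A \<union> B)" by (simp add: graph_perms_def)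
  assume fA: "finite A" and fB: "finite B"
  have "{x\<in>A \<union> B. (\<pi> \<circ> \<sigma>) x \<noteq> x} = {x\<in>A. \<pi> x \<noteq> x} \<union> {x\<in>B. \<sigma> x \<noteq> x}"
  proof (intro equalityI subsetI)
    fix z assume "z \<in> {x\<in>A \<union> B. (\<pi> \<circ> \<sigma>) x \<noteq> x}"
    then show "z \<in> {x\<in>A. \<pi> x \<noteq> x} \<union> {x\<in>B. \<sigma> x \<noteq> x}"
      using sA[of z] pBz[of z] by (cases "z \<in> A") auto
  next
    fix z assume "z \<in> {x\<in>A. \<pi> x \<noteq> x} \<union> {x\<in>B. \<sigma> x \<noteq> x}"
    then show "z \<in> {x\<in>A \<union> B. (\<pi> \<circ> \<sigma>) x \<noteq> x}"
      using sA[of z] pBz[of z] by (cases "z \<in> A") auto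
  qed
  then have "card {x\<in>A \<union> B. (\<pi> \<circ> \<sigma>) x \<noteq> x} = card {x\<in>A. \<pi> x \<noteq> x} + card {x\<in>B. \<sigma> x \<noteq> x}"
    using fA fB d by (simp add: card_Un_disjoint disjoint_iff)
  then show "wt \<alpha> (A \<union> B) (\<pi> \<circ> \<sigma>) = wt \<alpha> A \<pi> * wt \<alpha> B \<sigma>"
    unfolding wt_def by (simp add: algebra_simps flip: exp_add)
qed

lemma sig:
  assumes "\<pi> \<in> graph_perms E A" "\<sigma> \<in> graph_perms E (U - A)" "z \<in> U - A"
  shows "(\<pi> \<circ> \<sigma>) z = \<sigma> z"
proof -
  have pS: "\<sigma> permutes (U - A)" using assms(2) by (simp add: graph_perms_def)
  have pA: "\<pi> permutes A" using assms(1) by (simp add: graph_perms_def)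
  have "\<sigma> z \<in> U - A" using permutes_in_image[OF pS] assms(3) by simp
  then have "\<pi> (\<sigma> z) = \<sigma> z" using permutes_not_in[OF pA] by simp
  then show ?thesis by simp
qed

lemma fam:
  assumes fin: "finite U" and AU: "A \<subseteq> U" and s: "\<sigma> \<in> graph_perms E (U - A)"
  shows "(\<lambda>\<pi>. \<pi> \<circ> \<sigma>) ` graph_perms E A \<subseteq> graph_perms E U"
    and "sum (wt \<alpha> U) ((\<lambda>\<pi>. \<pi> \<circ> \<sigma>) ` graph_perms E A) = wt \<alpha> (U - A) \<sigma> * Z E \<alpha> A"
proof -
  have UA: "A \<union> (U - A) = U" using AU by blast
  show "(\<lambda>\<pi>. \<pi> \<circ> \<sigma>) ` graph_perms E A \<subseteq> graph_perms E U"
  proof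
    fix f assume "f \<in> (\<lambda>\<pi>. \<pi> \<circ> \<sigma>) ` graph_perms E A"
    then obtain \<pi> where p: "\<pi> \<in> graph_perms E A" and f: "f = \<pi> \<circ> \<sigma>" by blast
    have "\<pi> \<circ> \<sigma> \<in> graph_perms E (A \<union> (U - A))" by (rule comp_in(1)[OF p s]) blast
    then show "f \<in> graph_perms E U" using f UA by simp
  qed
  have surj: "surj \<sigma>" using s permutes_surj by (auto simp: graph_perms_def)
  have inj: "inj_on (\<lambda>\<pi>. \<pi> \<circ> \<sigma>) (graph_perms E A)"
  proof (rule inj_onI)
    fix p p' assume "p \<circ> \<sigma> = p' \<circ> \<sigma>"
    note eq = this
    show "p = p'"
    proof
      fix y obtain z where "y = \<sigma> z" using surj by (metis surjD)
      then show "p y = p' y" using eq by (metis comp_apply)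
    qed
  qed
  have fA: "finite A" using AU fin finite_subset by blast
  have "sum (wt \<alpha> U) ((\<lambda>\<pi>. \<pi> \<circ> \<sigma>) ` graph_perms E A) = (\<Sum>\<pi>\<in>graph_perms E A. wt \<alpha> U (\<pi> \<circ> \<sigma>))"
    using sum.reindex[OF inj] by simp
  also have "\<dots> = (\<Sum>\<pi>\<in>graph_perms E A. wt \<alpha> A \<pi> * wt \<alpha> (U - A) \<sigma>)"
  proof (rule sum.cong[OF refl])
    fix \<pi> assume p: "\<pi> \<in> graph_perms E A"
    have "wt \<alpha> (A \<union> (U - A)) (\<pi> \<circ> \<sigma>) = wt \<alpha> A \<pi> * wt \<alpha> (U - A) \<sigma>"
      by (rule comp_in(2)[OF p s]) (use fA fin in auto)
    then show "wt \<alpha> U (\<pi> \<circ> \<sigma>) = wt \<alpha> A \<pi> * wt \<alpha> (U - A) \<sigma>" using UA by simp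
  qed
  also have "\<dots> = wt \<alpha> (U - A) \<sigma> * Z E \<alpha> A"
    unfolding Z_wt by (subst mult.commute) (rule sum_distrib_right[symmetric])
  finally show "sum (wt \<alpha> U) ((\<lambda>\<pi>. \<pi> \<circ> \<sigma>) ` graph_perms E A) = wt \<alpha> (U - A) \<sigma> * Z E \<alpha> A" .
qed

lemma id_gp: "id \<in> graph_perms E S" by (simp add: graph_perms_def permutes_id)
lemma wt_id: "wt \<alpha> S id = 1" by (simp add: wt_def)

lemma tr_gp: assumes "E x y" "E y x" "x \<noteq> y"
  shows "transpose x y \<in> graph_perms E {x, y}" and "wt \<alpha> {x,y} (transpose x y) = exp (- \<alpha> * 2)"
proof -
  show "transpose x y \<in> graph_perms E {x, y}"
    using assms by (auto simp: graph_perms_def permutes_swap_id)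
  have "{z \<in> {x, y}. transpose x y z \<noteq> z} = {x,y}" using assms by auto
  then show "wt \<alpha> {x,y} (transpose x y) = exp (- \<alpha> * 2)" using assms by (simp add: wt_def)
qed

lemma fam_sig:
  assumes "f \<in> (\<lambda>\<pi>. \<pi> \<circ> \<sigma>) ` graph_perms E A" "\<sigma> \<in> graph_perms E (U - A)" "z \<in> U - A"
  shows "f z = \<sigma> z"
proof -
  obtain \<pi> where "\<pi> \<in> graph_perms E A" "f = \<pi> \<circ> \<sigma>" using assms(1) by blast
  then show ?thesis using sig[OF _ assms(2,3)] by simp
qed

lemma fam_fin: assumes "finite U" "A \<subseteq> U" "\<sigma> \<in> graph_perms E (U - A)" shows
   "finite ((\<lambda>\<pi>. \<pi> \<circ> \<sigma>) ` graph_perms E A)"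
  by (rule finite_subset[OF fam(1)[OF assms] gp_finite[OF assms(1)]])

lemma sum_gp_le: "finite U \<Longrightarrow> F \<subseteq> graph_perms E U \<Longrightarrow> sum (wt \<alpha> U) F \<le> Z E \<alpha> U"
  unfolding Z_wt by (rule sum_mono2) (auto simp: gp_finite wt_def)

lemma step2:
  assumes fin: "finite U" and xU: "x \<in> U" and yU: "y \<in> U" and xy: "x \<noteq> y" and e: "E x y" "E y x"
  shows "Z E \<alpha> (U - {x}) + exp (- \<alpha> * 2) * Z E \<alpha> (U - {x, y}) \<le> Z E \<alpha> U"
proof -
  define A0 where "A0 = U - {x}"
  define A1 where "A1 = U - {x, y}"
  have d0: "U - A0 = {x}" using xU unfolding A0_def by blast
  have d1: "U - A1 = {x, y}" using xU yU unfolding A1_def by blast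
  have s0: "id \<in> graph_perms E (U - A0)" unfolding d0 by (rule id_gp)
  have s1: "transpose x y \<in> graph_perms E (U - A1)" unfolding d1 by (rule tr_gp[OF e xy])
  define F0 where "F0 = (\<lambda>\<pi>. \<pi> \<circ> id) ` graph_perms E A0"
  define F1 where "F1 = (\<lambda>\<pi>. \<pi> \<circ> transpose x y) ` graph_perms E A1"
  have A0U: "A0 \<subseteq> U" and A1U: "A1 \<subseteq> U" unfolding A0_def A1_def by auto
  have sF0: "sum (wt \<alpha> U) F0 = Z E \<alpha> A0" unfolding F0_def using fam(2)[OF fin A0U s0, of \<alpha>] d0 by (simp add: wt_def)
  have sF1: "sum (wt \<alpha> U) F1 = exp (- \<alpha> * 2) * Z E \<alpha> A1"
    unfolding F1_def using fam(2)[OF fin A1U s1] d1 tr_gp(2)[OF e xy] by simp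
  have fx0: "f x = x" if "f \<in> F0" for f using fam_sig[OF that[unfolded F0_def] s0] d0 by simp
  have fx1: "f x = y" if "f \<in> F1" for f using fam_sig[OF that[unfolded F1_def] s1] d1 by simp
  have disj: "F0 \<inter> F1 = {}" using fx0 fx1 xy by fastforce
  have fin0: "finite F0" unfolding F0_def by (rule fam_fin[OF fin A0U s0])
  have fin1: "finite F1" unfolding F1_def by (rule fam_fin[OF fin A1U s1])
  have sub: "F0 \<union> F1 \<subseteq> graph_perms E U" unfolding F0_def F1_def using fam(1)[OF fin A0U s0] fam(1)[OF fin A1U s1] by blast
  have "sum (wt \<alpha> U) (F0 \<union> F1) = sum (wt \<alpha> U) F0 + sum (wt \<alpha> U) F1"
    by (rule sum.union_disjoint[OF fin0 fin1 disj])
  then show ?thesis using sum_gp_le[OF fin sub, of \<alpha>] sF0 sF1 unfolding A0_def A1_def by simp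
qed

lemma step1:
  assumes fin: "finite U" and xU: "x \<in> U"
  shows "Z E \<alpha> (U - {x}) \<le> Z E \<alpha> U"
proof -
  define A0 where "A0 = U - {x}"
  have d0: "U - A0 = {x}" using xU unfolding A0_def by blast
  have s0: "id \<in> graph_perms E (U - A0)" unfolding d0 by (rule id_gp)
  have A0U: "A0 \<subseteq> U" unfolding A0_def by auto
  have "sum (wt \<alpha> U) ((\<lambda>\<pi>. \<pi> \<circ> id) ` graph_perms E A0) = Z E \<alpha> A0"
    using fam(2)[OF fin A0U s0, of \<alpha>] d0 by (simp add: wt_def)
  then show ?thesis using sum_gp_le[OF fin fam(1)[OF fin A0U s0], of \<alpha>]
    unfolding A0_def by simp
qed

definition echain :: "('a \<Rightarrow> 'a \<Rightarrow> bool) \<Rightarrow> 'a list \<Rightarrow> bool" where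
  "echain E xs \<longleftrightarrow> (\<forall>i. Suc i < length xs \<longrightarrow> E (xs ! i) (xs ! Suc i))"

lemma echain_Cons: assumes "echain E (a # l)" shows "echain E l"
  unfolding echain_def
proof (intro allI impI)
  fix i assume i: "Suc i < length l"
  then have "Suc (Suc i) < length (a # l)" by simp
  then have "E ((a # l) ! Suc i) ((a # l) ! Suc (Suc i))" by (rule assms[unfolded echain_def, rule_format])
  then show "E (l ! i) (l ! Suc i)" by simp
qed

lemma echain_snoc: assumes "echain E (l @ [b])" shows "echain E l"
  unfolding echain_def
proof (intro allI impI)
  fix i assume i: "Suc i < length l"
  then have "E ((l @ [b]) ! i) ((l @ [b]) ! Suc i)" using assms unfolding echain_def by simp
  then show "E (l ! i) (l ! Suc i)" using i by (simp add: nth_append)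
qed

lemma exp2: "exp (- (\<alpha>::real) * 2) = exp (- \<alpha>) ^ 2"
  by (simp add: power2_eq_square flip: exp_add)

lemma path_Z:
  assumes "finite U" "set xs \<subseteq> U" "distinct xs" "echain E xs" "\<forall>x y. E x y \<longrightarrow> E y x"
  shows "Z E \<alpha> (U - set xs) * PP (exp (- \<alpha>) ^ 2) (length xs) \<le> Z E \<alpha> U"
  using assms
proof (induction xs arbitrary: U rule: induct_list012)
  case 1 then show ?case by simp
next
  case (2 x) then show ?case using step1[of U x E \<alpha>] by simp
next
  case (3 x y zs)
  let ?t = "exp (- \<alpha>) ^ 2"
  let ?W = "U - set (x # y # zs)"
  have exy: "E x y" using 3(6)[unfolded echain_def, rule_format, of 0] by simp
  have eyx: "E y x" by (rule 3(7)[rule_format, OF exy])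
  have xy: "x \<noteq> y" using 3(5) by simp
  have f1: "finite (U - {x})" using 3(3) by simp
  have s1: "set (y # zs) \<subseteq> U - {x}" using 3(4) 3(5) by auto
  have d1: "distinct (y # zs)" using 3(5) by simp
  have c1: "echain E (y # zs)" by (rule echain_Cons[OF 3(6)])
  have h1: "Z E \<alpha> (U - {x} - set (y # zs)) * PP ?t (length (y # zs)) \<le> Z E \<alpha> (U - {x})"
    by (rule 3(2)[OF f1 s1 d1 c1 3(7)])
  have f2: "finite (U - {x, y})" using 3(3) by simp
  have s2: "set zs \<subseteq> U - {x, y}" using 3(4) 3(5) by auto
  have d2: "distinct zs" using 3(5) by simp
  have c2: "echain E zs" by (rule echain_Cons[OF c1])
  have h2: "Z E \<alpha> (U - {x, y} - set zs) * PP ?t (length zs) \<le> Z E \<alpha> (U - {x, y})"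
    by (rule 3(1)[OF f2 s2 d2 c2 3(7)])
  have w1: "U - {x} - set (y # zs) = ?W" by auto
  have w2: "U - {x, y} - set zs = ?W" by auto
  have st: "Z E \<alpha> (U - {x}) + ?t * Z E \<alpha> (U - {x, y}) \<le> Z E \<alpha> U"
    using step2[OF 3(3) _ _ xy exy eyx, of \<alpha>] 3(4) exp2 by simp
  have tnn: "?t \<ge> 0" by simp
  have "Z E \<alpha> ?W * PP ?t (length (x # y # zs)) = Z E \<alpha> ?W * PP ?t (length (y # zs)) + ?t * (Z E \<alpha> ?W * PP ?t (length zs))"
    by (simp add: algebra_simps)
  also have "\<dots> \<le> Z E \<alpha> (U - {x}) + ?t * Z E \<alpha> (U - {x, y})"
    using h1 h2 w1 w2 tnn by (intro add_mono mult_left_mono) auto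
  also have "\<dots> \<le> Z E \<alpha> U" by (rule st)
  finally show ?case .
qed

lemma rot_nth:
  assumes d: "distinct xs" and i: "i < length xs"
  shows "cycle_of_list xs (xs ! i) = xs ! (Suc i mod length xs)"
proof -
  have "map (cycle_of_list xs) xs = rotate1 xs" using cyclic_rotation[OF d, of 1] by simp
  then have "map (cycle_of_list xs) xs ! i = rotate1 xs ! i" by simp
  then show ?thesis using i by (simp add: nth_rotate1)
qed

lemma rot_gp:
  assumes d: "distinct xs" and n2: "length xs \<ge> 2"
    and e: "\<forall>i<length xs. E (xs ! i) (xs ! (Suc i mod length xs))"
  shows "cycle_of_list xs \<in> graph_perms E (set xs)"
    and "wt \<alpha> (set xs) (cycle_of_list xs) = exp (- \<alpha> * real (length xs))"
proof -
  have ed: "\<forall>x\<in>set xs. cycle_of_list xs x = x \<or> E x (cycle_of_list xs x)"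
  proof
    fix x assume "x \<in> set xs"
    then obtain i where i: "i < length xs" "x = xs ! i" by (metis in_set_conv_nth)
    then show "cycle_of_list xs x = x \<or> E x (cycle_of_list xs x)" using rot_nth[OF d i(1)] e by simp
  qed
  show "cycle_of_list xs \<in> graph_perms E (set xs)"
    using cycle_permutes ed by (simp add: graph_perms_def)
  have mv: "{x \<in> set xs. cycle_of_list xs x \<noteq> x} = set xs"
  proof (intro equalityI subsetI)
    fix x assume "x \<in> set xs"
    then obtain i where i: "i < length xs" "x = xs ! i" by (metis in_set_conv_nth)
    have ne: "Suc i mod length xs \<noteq> i"
    proof (cases "Suc i < length xs")
      case True then show ?thesis by simp
    next
      case False then have "Suc i = length xs" using i by simp
      then show ?thesis using n2 by simp
    qed
    have lt: "Suc i mod length xs < length xs" using n2 by (intro mod_less_divisor) linarith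
    have "xs ! (Suc i mod length xs) \<noteq> xs ! i"
      using nth_eq_iff_index_eq[OF d lt i(1)] ne by simp
    then show "x \<in> {x \<in> set xs. cycle_of_list xs x \<noteq> x}"
      using rot_nth[OF d i(1)] i \<open>x \<in> set xs\<close> by simp
  qed simp
  show "wt \<alpha> (set xs) (cycle_of_list xs) = exp (- \<alpha> * real (length xs))"
    unfolding wt_def mv using distinct_card[OF d] by simp
qed



lemma dist_nth: "distinct xs \<Longrightarrow> i < length xs \<Longrightarrow> j < length xs \<Longrightarrow> i \<noteq> j \<Longrightarrow> xs ! i \<noteq> xs ! j"
  by (simp add: nth_eq_iff_index_eq)

lemma step4:
  assumes fin: "finite U" and sub: "set xs \<subseteq> U" and d: "distinct xs" and n3: "length xs \<ge> 3"
    and e: "\<forall>i<length xs. E (xs ! i) (xs ! (Suc i mod length xs))"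
    and sym: "\<forall>x y. E x y \<longrightarrow> E y x"
  shows "Z E \<alpha> (U - {xs ! 0}) + exp (- \<alpha> * 2) * Z E \<alpha> (U - {xs ! 0, xs ! 1})
     + exp (- \<alpha> * 2) * Z E \<alpha> (U - {xs ! 0, xs ! (length xs - 1)})
     + exp (- \<alpha> * real (length xs)) * Z E \<alpha> (U - set xs) \<le> Z E \<alpha> U"
proof -
  define n where "n = length xs"
  define a where "a = xs ! 0"
  define b where "b = xs ! 1"
  define c where "c = xs ! (n - 1)"
  define dd where "dd = xs ! 2"
  have n3': "n \<ge> 3" using n3 unfolding n_def .
  have ne: "xs \<noteq> []" using n3 by auto
  have aU: "a \<in> U" using ne subsetD[OF sub nth_mem[of 0 xs]] n3' unfolding a_def n_def by simp
  have bU: "b \<in> U" using subsetD[OF sub nth_mem[of 1 xs]] n3' unfolding b_def n_def by simp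
  have cU: "c \<in> U" using subsetD[OF sub nth_mem[of "n - 1" xs]] n3' unfolding c_def n_def by simp
  have ab: "a \<noteq> b" unfolding a_def b_def n_def by (rule dist_nth[OF d]) (use n3 in auto)
  have ac: "a \<noteq> c" unfolding a_def c_def n_def by (rule dist_nth[OF d]) (use n3 in auto)
  have bc: "b \<noteq> c" unfolding b_def c_def n_def by (rule dist_nth[OF d]) (use n3 in auto)
  have da: "dd \<noteq> a" unfolding dd_def a_def n_def by (rule dist_nth[OF d]) (use n3 in auto)
  have eab: "E a b" using ne e[rule_format, of 0] n3' unfolding a_def b_def n_def by simp
  have eba: "E b a" by (rule sym[rule_format, OF eab])
  have eca: "E c a"
  proof -
    have "Suc (n - 1) mod n = 0" using n3' by simp
    then show ?thesis using e[rule_format, of "n - 1"] n3' unfolding a_def c_def n_def by simp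
  qed
  have eac: "E a c" by (rule sym[rule_format, OF eca])
  have ra: "cycle_of_list xs a = b" using ne rot_nth[OF d, of 0] n3' unfolding a_def b_def n_def by simp
  have rb: "cycle_of_list xs b = dd" using ne rot_nth[OF d, of 1] n3' unfolding dd_def b_def n_def by (simp add: numeral_2_eq_2)
  define A0 where "A0 = U - {a}"
  define A1 where "A1 = U - {a, b}"
  define A2 where "A2 = U - {a, c}"
  define A3 where "A3 = U - set xs"
  have d0: "U - A0 = {a}" using aU unfolding A0_def by blast
  have d1: "U - A1 = {a, b}" using aU bU unfolding A1_def by blast
  have d2: "U - A2 = {a, c}" using aU cU unfolding A2_def by blast
  have d3: "U - A3 = set xs" using sub unfolding A3_def by blast
  have s0: "id \<in> graph_perms E (U - A0)" unfolding d0 by (rule id_gp)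
  have s1: "transpose a b \<in> graph_perms E (U - A1)" unfolding d1 by (rule tr_gp[OF eab eba ab])
  have s2: "transpose a c \<in> graph_perms E (U - A2)" unfolding d2 by (rule tr_gp[OF eac eca ac])
  have n2: "length xs \<ge> 2" using n3 by simp
  have s3: "cycle_of_list xs \<in> graph_perms E (U - A3)" unfolding d3 by (rule rot_gp(1)[OF d n2 e])
  have A0U: "A0 \<subseteq> U" and A1U: "A1 \<subseteq> U" and A2U: "A2 \<subseteq> U" and A3U: "A3 \<subseteq> U"
    unfolding A0_def A1_def A2_def A3_def by auto
  define F0 where "F0 = (\<lambda>\<pi>. \<pi> \<circ> id) ` graph_perms E A0"
  define F1 where "F1 = (\<lambda>\<pi>. \<pi> \<circ> transpose a b) ` graph_perms E A1"
  define F2 where "F2 = (\<lambda>\<pi>. \<pi> \<circ> transpose a c) ` graph_perms E A2"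
  define F3 where "F3 = (\<lambda>\<pi>. \<pi> \<circ> cycle_of_list xs) ` graph_perms E A3"
  have sF0: "sum (wt \<alpha> U) F0 = Z E \<alpha> A0" unfolding F0_def
    using fam(2)[OF fin A0U s0, of \<alpha>] d0 by (simp add: wt_def)
  have sF1: "sum (wt \<alpha> U) F1 = exp (- \<alpha> * 2) * Z E \<alpha> A1"
    unfolding F1_def using fam(2)[OF fin A1U s1, of \<alpha>] d1 tr_gp(2)[OF eab eba ab, of \<alpha>] by simp
  have sF2: "sum (wt \<alpha> U) F2 = exp (- \<alpha> * 2) * Z E \<alpha> A2"
    unfolding F2_def using fam(2)[OF fin A2U s2, of \<alpha>] d2 tr_gp(2)[OF eac eca ac, of \<alpha>] by simp
  have sF3: "sum (wt \<alpha> U) F3 = exp (- \<alpha> * real (length xs)) * Z E \<alpha> A3"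
    unfolding F3_def using fam(2)[OF fin A3U s3, of \<alpha>] d3 rot_gp(2)[OF d n2 e, of \<alpha>] by simp
  have fa0: "f a = a" if "f \<in> F0" for f using fam_sig[OF that[unfolded F0_def] s0] d0 by simp
  have fa1: "f a = b" if "f \<in> F1" for f using fam_sig[OF that[unfolded F1_def] s1] d1 by simp
  have fb1: "f b = a" if "f \<in> F1" for f using fam_sig[OF that[unfolded F1_def] s1] d1 by simp
  have fa2: "f a = c" if "f \<in> F2" for f using fam_sig[OF that[unfolded F2_def] s2] d2 by simp
  have aS: "a \<in> set xs" unfolding a_def by (rule nth_mem) (use n3 ne in simp)
  have bS: "b \<in> set xs" unfolding b_def by (rule nth_mem) (use n3 ne in simp)
  have fa3: "f a = b" if "f \<in> F3" for f using fam_sig[OF that[unfolded F3_def] s3, of a] d3 ra aS by simp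
  have fb3: "f b = dd" if "f \<in> F3" for f using fam_sig[OF that[unfolded F3_def] s3, of b] d3 rb bS by simp
  have fin0: "finite F0" unfolding F0_def by (rule fam_fin[OF fin A0U s0])
  have fin1: "finite F1" unfolding F1_def by (rule fam_fin[OF fin A1U s1])
  have fin2: "finite F2" unfolding F2_def by (rule fam_fin[OF fin A2U s2])
  have fin3: "finite F3" unfolding F3_def by (rule fam_fin[OF fin A3U s3])
  have n01: "f \<notin> F1" if "f \<in> F0" for f
  proof
    assume "f \<in> F1" then have "f a = b" by (rule fa1)
    moreover have "f a = a" using that by (rule fa0)
    ultimately show False using ab by simp
  qed
  have n2: "f \<notin> F2" if "f \<in> F0 \<union> F1" for f
  proof
    assume "f \<in> F2" then have fa: "f a = c" by (rule fa2)
    show False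
    proof (cases "f \<in> F0")
      case True then show False using fa0[OF True] fa ac by simp
    next
      case False then have "f \<in> F1" using that by blast
      then show False using fa1 fa bc by simp
    qed
  qed
  have n3f: "f \<notin> F3" if "f \<in> F0 \<union> F1 \<union> F2" for f
  proof
    assume f3: "f \<in> F3"
    have x1: "f a = b" by (rule fa3[OF f3])
    have x2: "f b = dd" by (rule fb3[OF f3])
    show False
    proof (cases "f \<in> F0")
      case True then show False using fa0[OF True] x1 ab by simp
    next
      case False
      show False
      proof (cases "f \<in> F1")
        case True then show False using fb1[OF True] x2 da by simp
      next
        case False
        then have "f \<in> F2" using that \<open>f \<notin> F0\<close> by blast
        then show False using fa2 x1 bc by simp
      qed
    qed
  qed
  have dj1: "F0 \<inter> F1 = {}" using n01 by blast
  have dj2: "(F0 \<union> F1) \<inter> F2 = {}" using n2 by blast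
  have dj3: "(F0 \<union> F1 \<union> F2) \<inter> F3 = {}" using n3f by blast
  have subU: "F0 \<union> F1 \<union> F2 \<union> F3 \<subseteq> graph_perms E U"
    unfolding F0_def F1_def F2_def F3_def
    using fam(1)[OF fin A0U s0] fam(1)[OF fin A1U s1] fam(1)[OF fin A2U s2] fam(1)[OF fin A3U s3] by blast
  have "sum (wt \<alpha> U) (F0 \<union> F1 \<union> F2 \<union> F3)
      = sum (wt \<alpha> U) F0 + sum (wt \<alpha> U) F1 + sum (wt \<alpha> U) F2 + sum (wt \<alpha> U) F3"
    using sum.union_disjoint[OF fin0 fin1 dj1, of "wt \<alpha> U"]
      sum.union_disjoint[OF _ fin2 dj2, of "wt \<alpha> U"]
      sum.union_disjoint[OF _ fin3 dj3, of "wt \<alpha> U"] fin0 fin1 fin2 by simp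
  then show ?thesis using sum_gp_le[OF fin subU, of \<alpha>] sF0 sF1 sF2 sF3
    unfolding A0_def A1_def A2_def A3_def a_def b_def c_def n_def by simp
qed



lemma rhs_eq:
  assumes "t \<ge> 0"
  shows "(1 / (1 + t)) powr (real k / 2) = 1 / sqrt (1 + t) ^ k"
proof -
  have p: "1 + t > 0" using assms by simp
  have "sqrt (1 + t) ^ k = ((1 + t) powr (1/2)) ^ k" using p by (simp add: powr_half_sqrt)
  also have "\<dots> = (1 + t) powr (real k / 2)" using p by (simp add: powr_power)
  finally have "sqrt (1 + t) ^ k = (1 + t) powr (real k / 2)" .
  then show ?thesis by (simp add: powr_divide)
qed

lemma ratio_le:
  fixes a b c :: real
  assumes "b > 0" "c > 0" "a * c \<le> b"
  shows "a / b \<le> 1 / c"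
  using assms by (simp add: field_simps)

lemma exp_n: "exp (- (\<alpha>::real) * real n) = exp (- \<alpha>) ^ n"
  by (simp add: exp_of_nat_mult[symmetric] mult.commute)

theorem proposition3p1:
  fixes V :: "'a set" and E :: "'a \<Rightarrow> 'a \<Rightarrow> bool" and \<alpha> :: real and xs :: "'a list"
  assumes "simple_graph V E"
  shows "(sa_path V E xs \<longrightarrow>
            Z E \<alpha> (V - set xs) / Z E \<alpha> V \<le> (1 / (1 + exp (-2 * \<alpha>))) powr (real (path_edges xs) / 2))
       \<and> (sa_cycle V E xs \<longrightarrow>
            Z E \<alpha> (V - set xs) / Z E \<alpha> V \<le> (1 / (1 + exp (-2 * \<alpha>))) powr (real (cycle_edges xs) / 2))"
proof -
  have fin: "finite V" using assms unfolding simple_graph_def by blast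
  have sym: "\<forall>x y. E x y \<longrightarrow> E y x" using assms unfolding simple_graph_def by blast
  have irr: "\<forall>x. \<not> E x x" using assms unfolding simple_graph_def by blast
  define s where "s = exp (- \<alpha>)"
  have s0: "s > 0" unfolding s_def by simp
  have t: "exp (-2 * \<alpha>) = s^2" unfolding s_def using exp2[of \<alpha>] by (simp add: mult.commute)
  define q where "q = sqrt (1 + s^2)"
  have q0: "q > 0" unfolding q_def by (simp add: add_pos_nonneg)
  have rhs: "(1 / (1 + exp (-2 * \<alpha>))) powr (real k / 2) = 1 / q ^ k" for k
    unfolding t q_def by (rule rhs_eq) simp
  have ZV: "Z E \<alpha> V > 0" by (rule Z_pos[OF fin])
  let ?W = "Z E \<alpha> (V - set xs)"
  have W0: "?W \<ge> 0" by (rule Z_nonneg)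
  have exps: "exp (- \<alpha>) ^ 2 = s^2" unfolding s_def ..
  have pathb: "?W * PP (s^2) (length xs) \<le> Z E \<alpha> V" if p: "sa_path V E xs"
  proof -
    have "set xs \<subseteq> V" "distinct xs" "echain E xs" using p unfolding sa_path_def echain_def by auto
    then show ?thesis using path_Z[OF fin _ _ _ sym, of xs \<alpha>] unfolding exps by simp
  qed
  have P1: "?W / Z E \<alpha> V \<le> (1 / (1 + exp (-2 * \<alpha>))) powr (real (path_edges xs) / 2)"
    if p: "sa_path V E xs"
  proof -
    have ne: "xs \<noteq> []" using p unfolding sa_path_def by simp
    then have len: "length xs = Suc (path_edges xs)" unfolding path_edges_def by simp
    have "q ^ path_edges xs \<le> PP (s^2) (length xs)" unfolding len q_def by (rule PP_path) simp
    then have "?W * q ^ path_edges xs \<le> ?W * PP (s^2) (length xs)" using W0 by (rule mult_left_mono)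
    also have "\<dots> \<le> Z E \<alpha> V" by (rule pathb[OF p])
    finally have "?W * q ^ path_edges xs \<le> Z E \<alpha> V" .
    then show ?thesis unfolding rhs by (intro ratio_le ZV) (use q0 in simp_all)
  qed
  have P2: "?W / Z E \<alpha> V \<le> (1 / (1 + exp (-2 * \<alpha>))) powr (real (cycle_edges xs) / 2)"
    if c: "sa_cycle V E xs"
  proof -
    have p: "sa_path V E xs" and el: "E (last xs) (hd xs)" using c unfolding sa_cycle_def by auto
    have ne: "xs \<noteq> []" and d: "distinct xs" and sub: "set xs \<subseteq> V" and ch: "echain E xs"
      using p unfolding sa_path_def echain_def by auto
    have key: "?W * q ^ length xs \<le> Z E \<alpha> V"
    proof (cases "length xs \<le> 2")
      case True
      have "length xs \<noteq> 1"
      proof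
        assume "length xs = 1"
        then obtain x where "xs = [x]" by (metis One_nat_def length_0_conv length_Suc_conv)
        then show False using el irr by simp
      qed
      moreover have "length xs \<noteq> 0" using ne by simp
      ultimately have l2: "length xs = 2" using True by linarith
      have e1: "q^2 = 1 + s^2" unfolding q_def by simp
      have e2: "PP (s^2) 2 = 1 + s^2" by (simp add: numeral_2_eq_2)
      have "q ^ length xs = PP (s^2) (length xs)" unfolding l2 e1 e2 ..
      then show ?thesis using pathb[OF p] by simp
    next
      case False
      obtain a ys where xs1: "xs = a # ys" using ne by (cases xs) auto
      have "ys \<noteq> []" using False xs1 by auto
      then obtain ws c where ys1: "ys = ws @ [c]" by (metis rev_exhaust)
      have "ws \<noteq> []" using False xs1 ys1 by auto
      then obtain b ws' where ws1: "ws = b # ws'" by (cases ws) auto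
      have xsd: "xs = a # b # ws' @ [c]" using xs1 ys1 ws1 by simp
      define m where "m = Suc (length ws')"
      have nm: "length xs = Suc (Suc m)" unfolding m_def xsd by simp
      have x0: "xs ! 0 = a" and x1: "xs ! 1 = b" unfolding xsd by simp_all
      have xl: "xs ! (length xs - 1) = c" using last_conv_nth[OF ne] xsd by simp
      have rot: "\<forall>i<length xs. E (xs ! i) (xs ! (Suc i mod length xs))"
      proof (intro allI impI)
        fix i assume i: "i < length xs"
        show "E (xs ! i) (xs ! (Suc i mod length xs))"
        proof (cases "Suc i < length xs")
          case True then show ?thesis using ch unfolding echain_def by simp
        next
          case False
          then have si: "Suc i = length xs" using i by simp
          then have m0: "Suc i mod length xs = 0" by simp
          have "i = length xs - 1" using si by simp
          then show ?thesis unfolding m0 using el last_conv_nth[OF ne] hd_conv_nth[OF ne] by simp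
        qed
      qed
      have st: "Z E \<alpha> (V - {a}) + exp (- \<alpha> * 2) * Z E \<alpha> (V - {a, b})
          + exp (- \<alpha> * 2) * Z E \<alpha> (V - {a, c})
          + exp (- \<alpha> * real (length xs)) * Z E \<alpha> (V - set xs) \<le> Z E \<alpha> V"
        using step4[OF fin sub d _ rot sym, of \<alpha>] False x0 x1 xl by simp
      have ch1: "echain E (b # ws' @ [c])" using ch unfolding xsd by (rule echain_Cons)
      have ch2: "echain E (ws' @ [c])" using ch1 by (rule echain_Cons)
      have ch3: "echain E (b # ws')" using ch1 echain_snoc[of E "b # ws'" c] by simp
      have dx: "distinct (a # b # ws' @ [c])" using d unfolding xsd .
      have subx: "set (a # b # ws' @ [c]) \<subseteq> V" using sub unfolding xsd .
      have B1: "Z E \<alpha> (V - {a} - set (b # ws' @ [c])) * PP (s^2) (length (b # ws' @ [c])) \<le> Z E \<alpha> (V - {a})"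
        using path_Z[OF _ _ _ ch1 sym, of "V - {a}" \<alpha>] fin dx subx unfolding exps by auto
      have B2: "Z E \<alpha> (V - {a, b} - set (ws' @ [c])) * PP (s^2) (length (ws' @ [c])) \<le> Z E \<alpha> (V - {a, b})"
        using path_Z[OF _ _ _ ch2 sym, of "V - {a, b}" \<alpha>] fin dx subx unfolding exps by auto
      have B3: "Z E \<alpha> (V - {a, c} - set (b # ws')) * PP (s^2) (length (b # ws')) \<le> Z E \<alpha> (V - {a, c})"
        using path_Z[OF _ _ _ ch3 sym, of "V - {a, c}" \<alpha>] fin dx subx unfolding exps by auto
      have e1: "V - {a} - set (b # ws' @ [c]) = V - set xs" unfolding xsd by auto
      have e2: "V - {a, b} - set (ws' @ [c]) = V - set xs" unfolding xsd by auto
      have e3: "V - {a, c} - set (b # ws') = V - set xs" unfolding xsd by auto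
      have l1: "length (b # ws' @ [c]) = Suc m" and l2: "length (ws' @ [c]) = m" and l3: "length (b # ws') = m"
        unfolding m_def by simp_all
      have B1': "?W * PP (s^2) (Suc m) \<le> Z E \<alpha> (V - {a})" using B1 unfolding e1 l1 .
      have B2': "?W * PP (s^2) m \<le> Z E \<alpha> (V - {a, b})" using B2 unfolding e2 l2 .
      have B3': "?W * PP (s^2) m \<le> Z E \<alpha> (V - {a, c})" using B3 unfolding e3 l3 .
      have ex2: "exp (- \<alpha> * 2) = s^2" unfolding s_def by (rule exp2)
      have exn: "exp (- \<alpha> * real (length xs)) = s ^ Suc (Suc m)" unfolding s_def nm by (rule exp_n)
      have s2: "s^2 \<ge> 0" by simp
      have "?W * q ^ length xs \<le> ?W * (PP (s^2) (Suc m) + 2 * s^2 * PP (s^2) m + s ^ Suc (Suc m))"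
        unfolding nm q_def using W0 PP_cycle[OF less_imp_le[OF s0], of m] by (rule mult_left_mono[rotated])
      also have "\<dots> = ?W * PP (s^2) (Suc m) + s^2 * (?W * PP (s^2) m) + s^2 * (?W * PP (s^2) m) + s ^ Suc (Suc m) * ?W"
        by (simp add: algebra_simps)
      also have "\<dots> \<le> Z E \<alpha> (V - {a}) + s^2 * Z E \<alpha> (V - {a, b}) + s^2 * Z E \<alpha> (V - {a, c}) + s ^ Suc (Suc m) * ?W"
        using B1' B2' B3' s2 by (intro add_mono mult_left_mono order_refl) auto
      also have "\<dots> \<le> Z E \<alpha> V" using st unfolding ex2 exn .
      finally show ?thesis .
    qed
    show ?thesis unfolding rhs cycle_edges_def using key by (intro ratio_le ZV) (use q0 in simp_all)
  qed
  show ?thesis using P1 P2 by blast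
qed

end
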